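(* There are absolute constants $c>0$ and $C$ such that the following holds for all $n$. Let $f\colon\{0,1\}^n\to\{0,1\}$ be a uniformly random balanced function. Then with probability at least $1-2^{-2^{cn}}$ there exists a mapping $\phi$ from ${\sf Dictator}$ to $f$ such that $\Pr_{x}[{\sf dist}(x,\phi(x))\le 2]\ge 1-C/n$ for $x$ uniform in $\{0,1\}^n$. In particular, with this probability, ${\sf avgStretch}(\phi)\le C'$ and ${\sf avgStretch}(\phi^{-1})\le C'$ for an absolute constant $C'$.
   Context: A balanced function has exactly $2^{n-1}$ inputs mapped to $1$; a uniformly random balanced function is uniform among these. ${\sf Dictator}(x)=x_1$. A mapping from $g$ to $f$ is a bijection $\phi$ of $\{0,1\}^n$ with $g(z)=f(\phi(z))$ for all $z$. ${\sf avgStretch}(\phi)=\mathbb{E}_{x,i}[{\sf dist}(\phi(x),\phi(x+e_i))]$ with $x$ uniform in $\{0,1\}^n$, $i$ uniform in $[n]$, ${\sf dist}$ Hamming distance. *)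

theory Defs
  imports Complex_Main
begin

text \<open>Points of the cube {0,1}^n are encoded as subsets of {..<n} (the support).
  Coordinate i (0-based) of x is (i \<in> x); x + e_i is x with coordinate i flipped.\<close>

definition cube :: "nat \<Rightarrow> nat set set" where
  "cube n = Pow {..<n}"

definition flip :: "nat set \<Rightarrow> nat \<Rightarrow> nat set" where
  "flip x i = (if i \<in> x then x - {i} else insert i x)"

definition hdist :: "nat set \<Rightarrow> nat set \<Rightarrow> nat" where
  "hdist x y = card ((x - y) \<union> (y - x))"

text \<open>Boolean functions on the cube, normalised to be False outside the cube so that
  each function on {0,1}^n is represented exactly once.\<close>
definition balanced_funs :: "nat \<Rightarrow> (nat set \<Rightarrow> bool) set" where
  "balanced_funs n = {f. (\<forall>x. x \<notin> cube n \<longrightarrow> f x = False)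
                        \<and> card {x \<in> cube n. f x} = 2 ^ (n - 1)}"

text \<open>Dictator(x) = x_1, the first coordinate (index 0 here).\<close>
definition dictator :: "nat set \<Rightarrow> bool" where
  "dictator x = (0 \<in> x)"

definition is_mapping :: "nat \<Rightarrow> (nat set \<Rightarrow> bool) \<Rightarrow> (nat set \<Rightarrow> bool) \<Rightarrow> (nat set \<Rightarrow> nat set) \<Rightarrow> bool" where
  "is_mapping n g f \<phi> \<longleftrightarrow> bij_betw \<phi> (cube n) (cube n) \<and> (\<forall>z \<in> cube n. g z = f (\<phi> z))"

definition avgStretch :: "nat \<Rightarrow> (nat set \<Rightarrow> nat set) \<Rightarrow> real" where
  "avgStretch n \<phi> = (\<Sum>x\<in>cube n. \<Sum>i<n. real (hdist (\<phi> x) (\<phi> (flip x i)))) / (2 ^ n * real n)"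

definition unif_prob :: "'a set \<Rightarrow> ('a \<Rightarrow> bool) \<Rightarrow> real" where
  "unif_prob S P = real (card {s \<in> S. P s}) / real (card S)"

end

theory Submission
  imports Defs "HOL-Real_Asymp.Real_Asymp"
begin


definition FunD :: "'a set \<Rightarrow> ('a \<Rightarrow> bool) set" where
  "FunD D = {g. \<forall>x. x \<notin> D \<longrightarrow> g x = False}"

definition dep :: "'a set \<Rightarrow> (('a \<Rightarrow> bool) \<Rightarrow> 'b) \<Rightarrow> bool" where
  "dep D h \<longleftrightarrow> (\<forall>g g'. (\<forall>x\<in>D. g x = g' x) \<longrightarrow> h g = h g')"

definition avg :: "'a set \<Rightarrow> (('a \<Rightarrow> bool) \<Rightarrow> real) \<Rightarrow> real" where
  "avg D h = (\<Sum>g\<in>FunD D. h g) / real (card (FunD D))"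

lemma FunD_bij: "bij_betw (\<lambda>S x. x \<in> S) (Pow D) (FunD D)"
  unfolding bij_betw_def inj_on_def FunD_def
proof (intro conjI ballI impI)
  fix S T assume "S \<in> Pow D" "T \<in> Pow D" "(\<lambda>x. x \<in> S) = (\<lambda>x. x \<in> T)"
  then show "S = T" by (metis Collect_mem_eq)
next
  show "(\<lambda>S x. x \<in> S) ` Pow D = {g. \<forall>x. x \<notin> D \<longrightarrow> g x = False}"
  proof (rule set_eqI, rule iffI)
    fix g assume "g \<in> {g. \<forall>x. x \<notin> D \<longrightarrow> g x = False}"
    then have "g = (\<lambda>x. x \<in> {x. g x})" "{x. g x} \<in> Pow D" by auto
    then show "g \<in> (\<lambda>S x. x \<in> S) ` Pow D" by blast
  qed auto
qed

lemma card_FunD: assumes "finite D" shows "card (FunD D) = 2 ^ card D"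
  proof -
  have "card (FunD D) = card (Pow D)" using bij_betw_same_card[OF FunD_bij[of D]] by simp
  then show ?thesis using card_Pow[OF assms] by simp
qed

lemma finite_FunD: "finite D \<Longrightarrow> finite (FunD D)"
  using bij_betw_finite[OF FunD_bij[of D]] by simp

lemma card_FunD_pos: "finite D \<Longrightarrow> card (FunD D) > 0"
  by (simp add: card_FunD)

lemma FunD_split:
  assumes "D1 \<inter> D2 = {}"
  shows "bij_betw (\<lambda>g. (\<lambda>x. x \<in> D1 \<and> g x, \<lambda>x. x \<in> D2 \<and> g x)) (FunD (D1 \<union> D2)) (FunD D1 \<times> FunD D2)"
  unfolding bij_betw_def inj_on_def
proof (intro conjI ballI impI)
  fix g g' assume g: "g \<in> FunD (D1 \<union> D2)" "g' \<in> FunD (D1 \<union> D2)"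
    and e: "(\<lambda>x. x \<in> D1 \<and> g x, \<lambda>x. x \<in> D2 \<and> g x) = (\<lambda>x. x \<in> D1 \<and> g' x, \<lambda>x. x \<in> D2 \<and> g' x)"
  show "g = g'"
  proof
    fix x
    from e have e1: "(\<lambda>x. x \<in> D1 \<and> g x) = (\<lambda>x. x \<in> D1 \<and> g' x)"
      and e2: "(\<lambda>x. x \<in> D2 \<and> g x) = (\<lambda>x. x \<in> D2 \<and> g' x)" by simp_all
    have "(x \<in> D1 \<and> g x) = (x \<in> D1 \<and> g' x)" "(x \<in> D2 \<and> g x) = (x \<in> D2 \<and> g' x)"
      using fun_cong[OF e1, of x] fun_cong[OF e2, of x] by simp_all
    then show "g x = g' x" using g unfolding FunD_def by (cases "x \<in> D1 \<union> D2") auto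
  qed
next
  show "(\<lambda>g. (\<lambda>x. x \<in> D1 \<and> g x, \<lambda>x. x \<in> D2 \<and> g x)) ` FunD (D1 \<union> D2) = FunD D1 \<times> FunD D2"
  proof (rule set_eqI, rule iffI)
    fix p assume p: "p \<in> FunD D1 \<times> FunD D2"
    obtain g1 g2 where pp: "p = (g1, g2)" by force
    define g where "g = (\<lambda>x. if x \<in> D1 then g1 x else g2 x)"
    have "g \<in> FunD (D1 \<union> D2)" using p pp unfolding g_def FunD_def by auto
    moreover have "p = (\<lambda>x. x \<in> D1 \<and> g x, \<lambda>x. x \<in> D2 \<and> g x)"
      using p pp assms unfolding g_def FunD_def by (auto intro!: ext)
    ultimately show "p \<in> (\<lambda>g. (\<lambda>x. x \<in> D1 \<and> g x, \<lambda>x. x \<in> D2 \<and> g x)) ` FunD (D1 \<union> D2)" by blast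
  qed (auto simp: FunD_def)
qed

lemma sum_FunD_split:
  fixes h1 h2 :: "('a \<Rightarrow> bool) \<Rightarrow> real"
  assumes "D1 \<inter> D2 = {}" "dep D1 h1" "dep D2 h2"
  shows "(\<Sum>g\<in>FunD (D1 \<union> D2). h1 g * h2 g) = (\<Sum>g\<in>FunD D1. h1 g) * (\<Sum>g\<in>FunD D2. h2 g)"
proof -
  let ?F = "\<lambda>g. (\<lambda>x. x \<in> D1 \<and> g x, \<lambda>x. x \<in> D2 \<and> g x)"
  have "(\<Sum>g\<in>FunD D1. h1 g) * (\<Sum>g\<in>FunD D2. h2 g) = (\<Sum>p\<in>FunD D1 \<times> FunD D2. h1 (fst p) * h2 (snd p))"
    by (simp add: sum_product sum.cartesian_product case_prod_beta)
  also have "\<dots> = (\<Sum>g\<in>FunD (D1 \<union> D2). h1 (fst (?F g)) * h2 (snd (?F g)))"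
    using sum.reindex_bij_betw[OF FunD_split[OF assms(1)], of "\<lambda>p. h1 (fst p) * h2 (snd p)"] by simp
  also have "\<dots> = (\<Sum>g\<in>FunD (D1 \<union> D2). h1 g * h2 g)"
  proof (rule sum.cong[OF refl])
    fix g
    have "h1 (fst (?F g)) = h1 g" by simp (rule assms(2)[unfolded dep_def, rule_format], simp)
    moreover have "h2 (snd (?F g)) = h2 g" by simp (rule assms(3)[unfolded dep_def, rule_format], simp)
    ultimately show "h1 (fst (?F g)) * h2 (snd (?F g)) = h1 g * h2 g" by simp
  qed
  finally show ?thesis by simp
qed

lemma avg_split:
  assumes "D1 \<inter> D2 = {}" "finite D1" "finite D2" "dep D1 h1" "dep D2 h2"
  shows "avg (D1 \<union> D2) (\<lambda>g. h1 g * h2 g) = avg D1 h1 * avg D2 h2"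
proof -
  have c: "card (FunD (D1 \<union> D2)) = card (FunD D1) * card (FunD D2)"
    using assms by (simp add: card_FunD card_Un_disjoint power_add)
  show ?thesis unfolding avg_def sum_FunD_split[OF assms(1,4,5)] c by simp
qed

lemma dep_const: "dep D (\<lambda>g. c)" by (simp add: dep_def)

lemma avg_mono_dom:
  assumes "D \<subseteq> E" "finite E" "dep D h"
  shows "avg E h = avg D h"
proof -
  have E: "E = D \<union> (E - D)" using assms by blast
  have "avg E h = avg (D \<union> (E - D)) (\<lambda>g. h g * 1)" using E by simp
  also have "\<dots> = avg D h * avg (E - D) (\<lambda>g. 1)"
    using assms finite_subset by (intro avg_split) (auto simp: dep_const)
  also have "avg (E - D) (\<lambda>g. 1) = 1"
    using card_FunD_pos[of "E - D"] assms by (simp add: avg_def)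
  finally show ?thesis by simp
qed

lemma dep_mono: "dep D h \<Longrightarrow> D \<subseteq> E \<Longrightarrow> dep E h"
  unfolding dep_def by blast

lemma avg_sum: "finite A \<Longrightarrow> avg D (\<lambda>g. \<Sum>a\<in>A. h a g) = (\<Sum>a\<in>A. avg D (h a))"
  unfolding avg_def by (simp add: sum.swap[of _ A] sum_divide_distrib)

lemma avg_mono: "finite D \<Longrightarrow> (\<And>g. g \<in> FunD D \<Longrightarrow> h g \<le> h' g) \<Longrightarrow> avg D h \<le> avg D h'"
  unfolding avg_def by (intro divide_right_mono sum_mono) auto

lemma avg_add: "avg D (\<lambda>g. h g + h' g) = avg D h + avg D h'"
  unfolding avg_def by (simp add: sum.distrib add_divide_distrib)

lemma avg_cmult: "avg D (\<lambda>g. c * h g) = c * avg D h"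
  unfolding avg_def by (simp add: sum_distrib_left)

lemma avg_const: "finite D \<Longrightarrow> avg D (\<lambda>g. c) = c"
  using card_FunD_pos[of D] by (simp add: avg_def)



definition ctyp :: "(nat set \<Rightarrow> bool) \<Rightarrow> nat set \<Rightarrow> nat" where
  "ctyp g z = (if \<not> g (insert 0 z) \<and> \<not> g z then 1 else if g (insert 0 z) \<and> g z then 2 else 0)"

fun st :: "nat \<Rightarrow> (nat set \<Rightarrow> bool) \<Rightarrow> nat set \<Rightarrow> nat" where
  "st 0 g z = ctyp g z"
| "st (Suc i) g z = (if st i g z + st i g (flip z (Suc i)) = 3 then 0 else st i g z)"

fun Dom :: "nat \<Rightarrow> nat set \<Rightarrow> nat set set" where
  "Dom 0 z = {z, insert 0 z}"
| "Dom (Suc i) z = Dom i z \<union> Dom i (flip z (Suc i))"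

fun r :: "nat \<Rightarrow> real" where
  "r 0 = 1/4"
| "r (Suc i) = r i * (1 - r i)"

lemma st_le2: "st i g z \<le> 2"
  by (induction i arbitrary: z) (auto simp: ctyp_def)

lemma st_Suc_1: "st (Suc i) g z = 1 \<longleftrightarrow> st i g z = 1 \<and> st i g (flip z (Suc i)) \<noteq> 2"
  using st_le2[of i g z] st_le2[of i g "flip z (Suc i)"] by auto

lemma st_Suc_2: "st (Suc i) g z = 2 \<longleftrightarrow> st i g z = 2 \<and> st i g (flip z (Suc i)) \<noteq> 1"
  using st_le2[of i g z] st_le2[of i g "flip z (Suc i)"] by auto

lemma dep_st: "dep (Dom i z) (\<lambda>g. st i g z)"
proof (induction i arbitrary: z)
  case 0
  show ?case unfolding dep_def by (auto simp: ctyp_def)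
next
  case (Suc i)
  show ?case unfolding dep_def
  proof (intro allI impI)
    fix g g' :: "nat set \<Rightarrow> bool" assume h: "\<forall>x\<in>Dom (Suc i) z. g x = g' x"
    have "st i g z = st i g' z"
      using Suc.IH[of z, unfolded dep_def] h by simp
    moreover have "st i g (flip z (Suc i)) = st i g' (flip z (Suc i))"
      using Suc.IH[of "flip z (Suc i)", unfolded dep_def] h by simp
    ultimately show "st (Suc i) g z = st (Suc i) g' z" by simp
  qed
qed

lemma dep_comp: assumes "dep D h" shows "dep D (\<lambda>g. F (h g))"
  unfolding dep_def
proof (intro allI impI)
  fix g g' :: "'a \<Rightarrow> bool" assume "\<forall>x\<in>D. g x = g' x"
  then have "h g = h g'" using assms unfolding dep_def by blast
  then show "F (h g) = F (h g')" by simp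
qed

lemma flip_mem: "j \<in> flip z i \<longleftrightarrow> (if j = i then j \<notin> z else j \<in> z)"
  unfolding flip_def by auto

lemma Dom_coord: "w \<in> Dom i z \<Longrightarrow> i < j \<Longrightarrow> (j \<in> w \<longleftrightarrow> j \<in> z)"
proof (induction i arbitrary: z w)
  case 0
  then show ?case by auto
next
  case (Suc i)
  show ?case
  proof (cases "w \<in> Dom i z")
    case True
    then show ?thesis using Suc.IH[of w z] Suc.prems by simp
  next
    case False
    then have "w \<in> Dom i (flip z (Suc i))" using Suc.prems by simp
    then show ?thesis using Suc.IH[of w "flip z (Suc i)"] Suc.prems by (simp add: flip_mem)
  qed
qed

lemma Dom_disj: "Dom i z \<inter> Dom i (flip z (Suc i)) = {}"
proof -
  { fix w assume "w \<in> Dom i z" "w \<in> Dom i (flip z (Suc i))"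
    then have "Suc i \<in> w \<longleftrightarrow> Suc i \<in> z" "Suc i \<in> w \<longleftrightarrow> Suc i \<in> flip z (Suc i)"
      using Dom_coord[OF _ lessI] by blast+
    then have False by (simp add: flip_mem) }
  then show ?thesis by blast
qed

lemma finite_Dom: "finite (Dom i z)"
  by (induction i arbitrary: z) auto

lemma Dom_sub: "z \<subseteq> {..<n} \<Longrightarrow> i < n \<Longrightarrow> w \<in> Dom i z \<Longrightarrow> w \<subseteq> {..<n}"
proof (induction i arbitrary: z w)
  case 0
  then show ?case by auto
next
  case (Suc i)
  have "flip z (Suc i) \<subseteq> {..<n}" using Suc.prems unfolding flip_def by auto
  then show ?case using Suc by auto
qed

lemma avg_compl: "finite D \<Longrightarrow> avg D (\<lambda>g. 1 - h g) = 1 - avg D h"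
  using avg_add[of D "\<lambda>g. 1" "\<lambda>g. - h g"] avg_cmult[of D "-1" h] avg_const[of D 1] by simp

lemma FunD_single: "FunD {a} = {(\<lambda>x. False), (\<lambda>x. x = a)}"
proof (rule set_eqI, rule iffI)
  fix g assume "g \<in> FunD {a}"
  then have "g = (\<lambda>x. x = a \<and> g a)" unfolding FunD_def by (auto intro!: ext)
  then show "g \<in> {(\<lambda>x. False), (\<lambda>x. x = a)}" by (cases "g a") auto
qed (auto simp: FunD_def)

lemma avg_single: "avg {a} (\<lambda>g. if \<not> g a then 1 else 0) = 1/2"
proof -
  have ne: "(\<lambda>x. False) \<noteq> (\<lambda>x. x = a)" by (metis (full_types))
  show ?thesis unfolding avg_def FunD_single using ne by simp
qed

lemma p_st: "0 \<notin> z \<Longrightarrow> avg (Dom i z) (\<lambda>g. if st i g z = 1 then 1 else 0) = r i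
   \<and> avg (Dom i z) (\<lambda>g. if st i g z = 2 then 1 else 0) = r i"
proof (induction i arbitrary: z)
  case 0
  have d: "Dom 0 z = {insert 0 z} \<union> {z}" by auto
  have dj: "{insert 0 z} \<inter> {z} = {}" using 0 by auto
  have "avg (Dom 0 z) (\<lambda>g. if st 0 g z = 1 then 1 else 0)
      = avg ({insert 0 z} \<union> {z}) (\<lambda>g. (if \<not> g (insert 0 z) then 1 else 0) * (if \<not> g z then 1 else 0))"
    unfolding d by (rule arg_cong[where f="avg _"], rule ext) (auto simp: ctyp_def)
  also have "\<dots> = 1/4"
    by (subst avg_split[OF dj]) (auto simp: dep_def avg_single)
  finally have 1: "avg (Dom 0 z) (\<lambda>g. if st 0 g z = 1 then 1 else 0) = r 0" by simp
  have avg_single2: "\<And>a::nat set. avg {a} (\<lambda>g. if g a then 1 else 0) = 1/2"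
  proof -
    fix a :: "nat set"
    have ne: "(\<lambda>x. False) \<noteq> (\<lambda>x. x = a)" by (metis (full_types))
    show "avg {a} (\<lambda>g. if g a then 1 else 0) = 1/2" unfolding avg_def FunD_single using ne by simp
  qed
  have "avg (Dom 0 z) (\<lambda>g. if st 0 g z = 2 then 1 else 0)
      = avg ({insert 0 z} \<union> {z}) (\<lambda>g. (if g (insert 0 z) then 1 else 0) * (if g z then 1 else 0))"
    unfolding d by (rule arg_cong[where f="avg _"], rule ext) (auto simp: ctyp_def)
  also have "\<dots> = 1/4"
    by (subst avg_split[OF dj]) (auto simp: dep_def avg_single2)
  finally have 2: "avg (Dom 0 z) (\<lambda>g. if st 0 g z = 2 then 1 else 0) = r 0" by simp
  show ?case using 1 2 by simp
next
  case (Suc i)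
  let ?z = "flip z (Suc i)"
  have z0: "0 \<notin> ?z" using Suc.prems by (simp add: flip_mem)
  note IH1 = Suc.IH[OF Suc.prems] and IH2 = Suc.IH[OF z0]
  have dz: "dep (Dom i z) (\<lambda>g. if st i g z = c then 1 else (0::real))" for c
    by (rule dep_comp[OF dep_st])
  have dz': "dep (Dom i ?z) (\<lambda>g. 1 - (if st i g ?z = c then 1 else (0::real)))" for c
    by (rule dep_comp[OF dep_st])
  have "avg (Dom (Suc i) z) (\<lambda>g. if st (Suc i) g z = 1 then 1 else 0)
     = avg (Dom i z \<union> Dom i ?z) (\<lambda>g. (if st i g z = 1 then 1 else 0) * (1 - (if st i g ?z = 2 then 1 else 0)))"
    unfolding Dom.simps(2) using st_Suc_1[of i _ z] by (intro arg_cong[where f="avg _"] ext) (simp del: st.simps)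
  also have "\<dots> = r i * (1 - r i)"
    by (subst avg_split[OF Dom_disj finite_Dom finite_Dom dz dz']) (simp only: avg_compl[OF finite_Dom] IH1 IH2)
  finally have 1: "avg (Dom (Suc i) z) (\<lambda>g. if st (Suc i) g z = 1 then 1 else 0) = r (Suc i)" by simp
  have "avg (Dom (Suc i) z) (\<lambda>g. if st (Suc i) g z = 2 then 1 else 0)
     = avg (Dom i z \<union> Dom i ?z) (\<lambda>g. (if st i g z = 2 then 1 else 0) * (1 - (if st i g ?z = 1 then 1 else 0)))"
    unfolding Dom.simps(2) using st_Suc_2[of i _ z] by (intro arg_cong[where f="avg _"] ext) (simp del: st.simps)
  also have "\<dots> = r i * (1 - r i)"
    by (subst avg_split[OF Dom_disj finite_Dom finite_Dom dz dz']) (simp only: avg_compl[OF finite_Dom] IH1 IH2)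
  finally have 2: "avg (Dom (Suc i) z) (\<lambda>g. if st (Suc i) g z = 2 then 1 else 0) = r (Suc i)" by simp
  show ?case using 1 2 by simp
qed

lemma r_bound: "0 \<le> r i \<and> r i \<le> 1 / (real i + 4)"
proof (induction i)
  case 0
  then show ?case by simp
next
  case (Suc i)
  let ?a = "1 / (real i + 4)"
  have a: "?a \<le> 1/4" by (simp add: field_simps)
  have "r i * (1 - r i) \<le> ?a * (1 - ?a)"
  proof -
    have "?a * (1 - ?a) - r i * (1 - r i) = (?a - r i) * (1 - ?a - r i)" by (simp add: algebra_simps)
    also have "\<dots> \<ge> 0" using Suc a by (intro mult_nonneg_nonneg) linarith+
    finally show ?thesis by simp
  qed
  also have "?a * (1 - ?a) \<le> 1 / (real (Suc i) + 4)"
  proof -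
    have p: "0 < real i * real i + (16 + real i * 8)"
    proof -
      have "0 \<le> real i * real i" by simp
      then show ?thesis by linarith
    qed
    show ?thesis by (simp add: field_simps) (simp add: divide_le_eq p)
  qed
  finally have "r i * (1 - r i) \<le> 1 / (real (Suc i) + 4)" .
  moreover have "0 \<le> r i * (1 - r i)" using Suc a by (intro mult_nonneg_nonneg) linarith+
  ultimately show ?case by simp
qed



fun pt :: "nat \<Rightarrow> (nat set \<Rightarrow> bool) \<Rightarrow> nat set \<Rightarrow> nat set" where
  "pt 0 g z = z"
| "pt (Suc i) g z = (if st i g z + st i g (flip z (Suc i)) = 3 then flip z (Suc i) else pt i g z)"

lemma flip_flip: "flip (flip z j) j = z"
  unfolding flip_def by auto

lemma st0_Suc: "st i g z = 0 \<Longrightarrow> st (Suc i) g z = 0 \<and> pt (Suc i) g z = pt i g z"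
  using st_le2[of i g "flip z (Suc i)"] by auto

lemma inv_a: "st i g z \<noteq> 0 \<Longrightarrow> st i g z = ctyp g z \<and> pt i g z = z"
proof (induction i arbitrary: z)
  case 0
  then show ?case by simp
next
  case (Suc i)
  then have "st i g z + st i g (flip z (Suc i)) \<noteq> 3" "st i g z \<noteq> 0"
    by (auto split: if_splits)
  then show ?case using Suc.IH[of z] by simp
qed

lemma inv_b: "ctyp g z \<noteq> 0 \<Longrightarrow> st i g z = 0 \<Longrightarrow>
   ctyp g (pt i g z) + ctyp g z = 3 \<and> st i g (pt i g z) = 0 \<and> pt i g (pt i g z) = z
   \<and> (\<exists>j. 1 \<le> j \<and> j \<le> i \<and> pt i g z = flip z j)"
proof (induction i arbitrary: z)
  case 0
  then show ?case by simp
next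
  case (Suc i)
  let ?z = "flip z (Suc i)"
  show ?case
  proof (cases "st i g z + st i g ?z = 3")
    case True
    then have a: "st i g z \<noteq> 0" "st i g ?z \<noteq> 0" using st_le2[of i g z] st_le2[of i g ?z] by auto
    have c: "ctyp g ?z + ctyp g z = 3" using inv_a[OF a(1)] inv_a[OF a(2)] True by simp
    have p: "pt (Suc i) g z = ?z" using True by simp
    have t2: "st i g ?z + st i g (flip ?z (Suc i)) = 3" using True by (simp add: flip_flip)
    have "st (Suc i) g ?z = 0" "pt (Suc i) g ?z = z"
      using t2 by (simp_all add: flip_flip del: st.simps) (simp add: flip_flip)
    then show ?thesis using c p by auto
  next
    case False
    then have a: "st i g z = 0" using Suc.prems(2) by (auto split: if_splits)
    have p: "pt (Suc i) g z = pt i g z" using False by simp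
    note IH = Suc.IH[OF Suc.prems(1) a]
    have "st (Suc i) g (pt i g z) = 0 \<and> pt (Suc i) g (pt i g z) = pt i g (pt i g z)"
      using st0_Suc IH by blast
    then show ?thesis using IH p by (auto intro: le_SucI)
  qed
qed

lemma inv_c: "ctyp g z = 0 \<Longrightarrow> st i g z = 0"
  by (induction i) auto

definition Bn :: "nat \<Rightarrow> nat set set" where
  "Bn n = {z. z \<subseteq> {..<n} \<and> 0 \<notin> z}"

lemma Bn_Pow: "Bn n = Pow ({..<n} - {0})"
  unfolding Bn_def by auto

lemma finite_Bn: "finite (Bn n)" unfolding Bn_Pow by simp

lemma card_Bn: "n \<ge> 1 \<Longrightarrow> card (Bn n) = 2 ^ (n - 1)"
  unfolding Bn_Pow by (simp add: card_Pow)

lemma flip_Bn: "z \<in> Bn n \<Longrightarrow> 1 \<le> j \<Longrightarrow> j < n \<Longrightarrow> flip z j \<in> Bn n"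
  unfolding Bn_def flip_def by auto

lemma cube_split: "cube n = Bn n \<union> insert 0 ` Bn n" and cube_disj: "Bn n \<inter> insert 0 ` Bn n = {}"
  if "n \<ge> 1"
proof -
  show "cube n = Bn n \<union> insert 0 ` Bn n"
  proof (rule set_eqI, rule iffI)
    fix x assume x: "x \<in> cube n"
    show "x \<in> Bn n \<union> insert 0 ` Bn n"
    proof (cases "0 \<in> x")
      case True
      then have "x = insert 0 (x - {0})" "x - {0} \<in> Bn n" using x unfolding Bn_def cube_def by auto
      then show ?thesis by blast
    next
      case False
      then show ?thesis using x unfolding Bn_def cube_def by auto
    qed
  qed (use that in \<open>auto simp: Bn_def cube_def\<close>)
  show "Bn n \<inter> insert 0 ` Bn n = {}" unfolding Bn_def by auto
qed

lemma hdist_flip: "j \<notin> z \<or> j \<in> z \<Longrightarrow> hdist z (flip z j) = 1"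
proof -
  have "(z - flip z j) \<union> (flip z j - z) = {j}" unfolding flip_def by auto
  then show ?thesis unfolding hdist_def by simp
qed

lemma hdist_ins_flip: "0 \<notin> z \<Longrightarrow> j \<noteq> 0 \<Longrightarrow> hdist (insert 0 z) (flip z j) = 2"
proof -
  assume "0 \<notin> z" "j \<noteq> 0"
  then have "(insert 0 z - flip z j) \<union> (flip z j - insert 0 z) = {0, j}" unfolding flip_def by auto
  then show ?thesis unfolding hdist_def using \<open>j \<noteq> 0\<close> by simp
qed

lemma hdist_ins: "0 \<notin> z \<Longrightarrow> hdist (insert 0 z) z = 1 \<and> hdist z (insert 0 z) = 1"
proof -
  assume "0 \<notin> z"
  then have "(insert 0 z - z) \<union> (z - insert 0 z) = {0}" "(z - insert 0 z) \<union> (insert 0 z - z) = {0}" by auto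
  then show ?thesis unfolding hdist_def by simp
qed

lemma hdist_sym: "hdist x y = hdist y x"
  unfolding hdist_def by (simp add: Un_commute)

lemma hdist_triangle: "finite x \<Longrightarrow> finite y \<Longrightarrow> finite z \<Longrightarrow> hdist x z \<le> hdist x y + hdist y z"
proof -
  assume f: "finite x" "finite y" "finite z"
  have "(x - z) \<union> (z - x) \<subseteq> ((x - y) \<union> (y - x)) \<union> ((y - z) \<union> (z - y))" by auto
  then have "card ((x - z) \<union> (z - x)) \<le> card (((x - y) \<union> (y - x)) \<union> ((y - z) \<union> (z - y)))"
    using f by (intro card_mono) auto
  also have "\<dots> \<le> card ((x - y) \<union> (y - x)) + card ((y - z) \<union> (z - y))" by (rule card_Un_le)
  finally show ?thesis unfolding hdist_def .
qed

lemma hdist_le_n: "x \<subseteq> {..<n} \<Longrightarrow> y \<subseteq> {..<n} \<Longrightarrow> hdist x y \<le> n"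
proof -
  assume "x \<subseteq> {..<n}" "y \<subseteq> {..<n}"
  then have "card ((x - y) \<union> (y - x)) \<le> card {..<n}" by (intro card_mono) auto
  then show ?thesis unfolding hdist_def by simp
qed

definition R0 where "R0 n g = {z \<in> Bn n. ctyp g z = 1}"
definition K0 where "K0 n g = {z \<in> Bn n. ctyp g z = 2}"
definition S1 where "S1 n k g = {z \<in> Bn n. st k g z = 1}"
definition S2 where "S2 n k g = {z \<in> Bn n. st k g z = 2}"

lemma pt_props:
  assumes "z \<in> Bn n" "ctyp g z \<noteq> 0" "st k g z = 0" "k < n"
  shows "pt k g z \<in> Bn n" "ctyp g (pt k g z) + ctyp g z = 3" "st k g (pt k g z) = 0"
    "pt k g (pt k g z) = z" "hdist (insert 0 z) (pt k g z) = 2" "hdist (insert 0 (pt k g z)) z = 2"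
proof -
  note b = inv_b[OF assms(2,3)]
  from b obtain j where j: "1 \<le> j" "j \<le> k" "pt k g z = flip z j" by blast
  show "pt k g z \<in> Bn n" using j flip_Bn[OF assms(1)] assms(4) by simp
  show "ctyp g (pt k g z) + ctyp g z = 3" "st k g (pt k g z) = 0" "pt k g (pt k g z) = z" using b by auto
  have z0: "0 \<notin> z" using assms(1) unfolding Bn_def by auto
  show "hdist (insert 0 z) (pt k g z) = 2" using j hdist_ins_flip[OF z0, of j] by simp
  have "0 \<notin> flip z j" using z0 j unfolding flip_def by auto
  then have "hdist (insert 0 (flip z j)) (flip (flip z j) j) = 2" using j by (intro hdist_ins_flip) auto
  then show "hdist (insert 0 (pt k g z)) z = 2" using j by (simp add: flip_flip)
qed

lemma S1_sub: "S1 n k g \<subseteq> R0 n g" and S2_sub: "S2 n k g \<subseteq> K0 n g"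
  unfolding S1_def S2_def R0_def K0_def using inv_a[of k g] by force+

lemma pt_bij: assumes "k < n" shows "bij_betw (pt k g) (R0 n g - S1 n k g) (K0 n g - S2 n k g)"
proof (rule bij_betw_byWitness[where f'="pt k g"])
  have st0: "st k g z = 0" if "z \<in> R0 n g - S1 n k g \<or> z \<in> K0 n g - S2 n k g" for z
    using that inv_a[of k g z] unfolding R0_def K0_def S1_def S2_def by (cases "st k g z = 0") auto
  have nz: "ctyp g z \<noteq> 0" "z \<in> Bn n" if "z \<in> R0 n g - S1 n k g \<or> z \<in> K0 n g - S2 n k g" for z
    using that unfolding R0_def K0_def by auto
  note P = pt_props[OF nz(2) nz(1) st0 assms]
  show "\<forall>a\<in>R0 n g - S1 n k g. pt k g (pt k g a) = a" using P(4) by blast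
  show "\<forall>a\<in>K0 n g - S2 n k g. pt k g (pt k g a) = a" using P(4) by blast
  show "pt k g ` (R0 n g - S1 n k g) \<subseteq> K0 n g - S2 n k g"
  proof
    fix w assume "w \<in> pt k g ` (R0 n g - S1 n k g)"
    then obtain z where z: "z \<in> R0 n g - S1 n k g" "w = pt k g z" by blast
    have "ctyp g z = 1" using z unfolding R0_def by auto
    then show "w \<in> K0 n g - S2 n k g" using P[of z] z unfolding K0_def S2_def by auto
  qed
  show "pt k g ` (K0 n g - S2 n k g) \<subseteq> R0 n g - S1 n k g"
  proof
    fix w assume "w \<in> pt k g ` (K0 n g - S2 n k g)"
    then obtain z where z: "z \<in> K0 n g - S2 n k g" "w = pt k g z" by blast
    have "ctyp g z = 2" using z unfolding K0_def by auto
    then show "w \<in> R0 n g - S1 n k g" using P[of z] z unfolding R0_def S1_def by auto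
  qed
qed

lemma balance_R0_K0:
  assumes "n \<ge> 1" "card {x \<in> cube n. g x} = 2 ^ (n - 1)"
  shows "card (R0 n g) = card (K0 n g)"
proof -
  have fin: "finite (Bn n)" by (rule finite_Bn)
  have inj: "inj_on (insert 0) (Bn n)"
  proof (rule inj_onI)
    fix x y assume "x \<in> Bn n" "y \<in> Bn n" "insert 0 x = insert 0 y"
    then have "insert 0 x - {0} = insert 0 y - {0}" "0 \<notin> x" "0 \<notin> y" unfolding Bn_def by auto
    then show "x = y" by simp
  qed
  have "int (card {x \<in> cube n. g x}) = (\<Sum>x\<in>cube n. if g x then 1 else 0)"
  proof -
    have "{x \<in> cube n. g x} = cube n \<inter> Collect g" by auto
    then show ?thesis by (simp add: sum.If_cases cube_def)
  qed
  also have "\<dots> = (\<Sum>x\<in>Bn n. if g x then 1 else 0) + (\<Sum>x\<in>insert 0 ` Bn n. if g x then 1 else 0)"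
    unfolding cube_split[OF assms(1)] by (rule sum.union_disjoint) (use fin cube_disj[OF assms(1)] in auto)
  also have "(\<Sum>x\<in>insert 0 ` Bn n. if g x then 1 else 0) = (\<Sum>z\<in>Bn n. if g (insert 0 z) then 1 else (0::int))"
    by (rule sum.reindex[OF inj, unfolded comp_def])
  finally have e: "int (card {x \<in> cube n. g x}) = (\<Sum>z\<in>Bn n. (if g z then 1 else 0) + (if g (insert 0 z) then 1 else 0))"
    by (simp add: sum.distrib)
  have "(\<Sum>z\<in>Bn n. (if g z then 1 else 0) + (if g (insert 0 z) then 1 else (0::int)))
      = (\<Sum>z\<in>Bn n. 1 + (if ctyp g z = 2 then 1 else 0) - (if ctyp g z = 1 then 1 else 0))"
    by (rule sum.cong) (auto simp: ctyp_def)
  also have "\<dots> = int (card (Bn n)) + int (card (K0 n g)) - int (card (R0 n g))"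
    unfolding R0_def K0_def by (simp add: sum.distrib sum_subtractf sum.If_cases fin Int_def)
  finally have "int (card {x \<in> cube n. g x}) = int (card (Bn n)) + int (card (K0 n g)) - int (card (R0 n g))"
    using e by simp
  then show ?thesis using assms card_Bn[OF assms(1)] by simp
qed

lemma card_S1_S2:
  assumes "n \<ge> 1" "k < n" "card {x \<in> cube n. g x} = 2 ^ (n - 1)"
  shows "card (S1 n k g) = card (S2 n k g)"
proof -
  have f: "finite (R0 n g)" "finite (K0 n g)" unfolding R0_def K0_def using finite_Bn by auto
  have "card (R0 n g - S1 n k g) = card (K0 n g - S2 n k g)" by (rule bij_betw_same_card[OF pt_bij[OF assms(2)]])
  moreover have "card (R0 n g - S1 n k g) = card (R0 n g) - card (S1 n k g)"
    using f S1_sub[of n k g] by (intro card_Diff_subset) (auto intro: finite_subset)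
  moreover have "card (K0 n g - S2 n k g) = card (K0 n g) - card (S2 n k g)"
    using f S2_sub[of n k g] by (intro card_Diff_subset) (auto intro: finite_subset)
  ultimately have "card (R0 n g) - card (S1 n k g) = card (K0 n g) - card (S2 n k g)" by simp
  moreover have "card (S1 n k g) \<le> card (R0 n g)" "card (S2 n k g) \<le> card (K0 n g)"
    using f S1_sub[of n k g] S2_sub[of n k g] by (simp_all add: card_mono)
  ultimately show ?thesis using balance_R0_K0[OF assms(1,3)] by simp
qed



definition phi :: "nat \<Rightarrow> nat \<Rightarrow> (nat set \<Rightarrow> bool) \<Rightarrow> (nat set \<Rightarrow> nat set) \<Rightarrow> nat set \<Rightarrow> nat set" where
  "phi n k g \<sigma> x = (if 0 \<in> x then
     (if ctyp g (x - {0}) = 0 then (if g x then x else x - {0})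
      else if ctyp g (x - {0}) = 1 then (if st k g (x - {0}) = 1 then \<sigma> (x - {0}) else pt k g (x - {0}))
      else x)
   else
     (if ctyp g x = 0 then (if g x then insert 0 x else x)
      else if ctyp g x = 1 then x
      else insert 0 (if st k g x = 2 then inv_into (S1 n k g) \<sigma> x else pt k g x)))"

lemma ctyp_cases: "ctyp g z = 0 \<or> ctyp g z = 1 \<or> ctyp g z = 2"
  unfolding ctyp_def by auto

lemma ctyp0: "ctyp g z = 0 \<Longrightarrow> g (insert 0 z) \<longleftrightarrow> \<not> g z"
  unfolding ctyp_def by (auto split: if_splits)
lemma ctyp1: "ctyp g z = 1 \<Longrightarrow> \<not> g (insert 0 z) \<and> \<not> g z"
  unfolding ctyp_def by (auto split: if_splits)
lemma ctyp2: "ctyp g z = 2 \<Longrightarrow> g (insert 0 z) \<and> g z"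
  unfolding ctyp_def by (auto split: if_splits)

lemma Bn_ins_cube: "z \<in> Bn n \<Longrightarrow> n \<ge> 1 \<Longrightarrow> insert 0 z \<in> cube n"
  unfolding Bn_def cube_def by auto
lemma Bn_cube: "z \<in> Bn n \<Longrightarrow> z \<in> cube n"
  unfolding Bn_def cube_def by auto
lemma Bn0: "z \<in> Bn n \<Longrightarrow> 0 \<notin> z" unfolding Bn_def by auto

locale phi_loc =
  fixes n k g \<sigma>
  assumes n1: "n \<ge> 1" and kn: "k < n" and sig: "bij_betw \<sigma> (S1 n k g) (S2 n k g)"
begin

abbreviation "P \<equiv> phi n k g \<sigma>"

lemma sig_props:
  assumes "z \<in> S1 n k g"
  shows "\<sigma> z \<in> Bn n" "ctyp g (\<sigma> z) = 2" "st k g (\<sigma> z) = 2" "inv_into (S1 n k g) \<sigma> (\<sigma> z) = z"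
proof -
  have w: "\<sigma> z \<in> S2 n k g" using sig assms by (auto simp: bij_betw_def)
  then show "\<sigma> z \<in> Bn n" "st k g (\<sigma> z) = 2" unfolding S2_def by auto
  show "ctyp g (\<sigma> z) = 2" using w S2_sub[of n k g] unfolding K0_def by auto
  show "inv_into (S1 n k g) \<sigma> (\<sigma> z) = z" using sig assms by (simp add: bij_betw_def)
qed

lemma siginv_props:
  assumes "w \<in> S2 n k g"
  shows "inv_into (S1 n k g) \<sigma> w \<in> S1 n k g" "\<sigma> (inv_into (S1 n k g) \<sigma> w) = w"
  using assms sig bij_betw_inv_into_left[OF sig] bij_betwE[OF bij_betw_inv_into[OF sig]]
  by (auto simp: bij_betw_def f_inv_into_f)

lemma S1_props: "z \<in> S1 n k g \<Longrightarrow> z \<in> Bn n \<and> ctyp g z = 1 \<and> st k g z = 1"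
  using S1_sub[of n k g] unfolding S1_def R0_def by auto

lemma st_not1: "z \<in> Bn n \<Longrightarrow> ctyp g z = 1 \<Longrightarrow> st k g z \<noteq> 1 \<Longrightarrow> st k g z = 0"
  using inv_a[of k g z] by (cases "st k g z = 0") auto
lemma st_not2: "z \<in> Bn n \<Longrightarrow> ctyp g z = 2 \<Longrightarrow> st k g z \<noteq> 2 \<Longrightarrow> st k g z = 0"
  using inv_a[of k g z] by (cases "st k g z = 0") auto

lemma phi_top:
  assumes z: "z \<in> Bn n"
  shows "P (insert 0 z) = (if ctyp g z = 0 then (if g (insert 0 z) then insert 0 z else z)
      else if ctyp g z = 1 then (if st k g z = 1 then \<sigma> z else pt k g z) else insert 0 z)"
  using Bn0[OF z] unfolding phi_def by simp

lemma phi_bot: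
  assumes z: "z \<in> Bn n"
  shows "P z = (if ctyp g z = 0 then (if g z then insert 0 z else z)
      else if ctyp g z = 1 then z
      else insert 0 (if st k g z = 2 then inv_into (S1 n k g) \<sigma> z else pt k g z))"
  using Bn0[OF z] unfolding phi_def by simp

lemma phi_base:
  assumes z: "z \<in> Bn n"
  shows "P (insert 0 z) \<in> cube n \<and> P (P (insert 0 z)) = insert 0 z \<and> g (P (insert 0 z))
     \<and> (z \<notin> S1 n k g \<longrightarrow> hdist (insert 0 z) (P (insert 0 z)) \<le> 2)"
    and "P z \<in> cube n \<and> P (P z) = z \<and> \<not> g (P z) \<and> (z \<notin> S2 n k g \<longrightarrow> hdist z (P z) \<le> 2)"
proof -
  have z0: "0 \<notin> z" using Bn0[OF z] .
  have zc: "z \<in> cube n" "insert 0 z \<in> cube n" using Bn_cube[OF z] Bn_ins_cube[OF z n1] by auto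
  have h1: "hdist (insert 0 z) z = 1" "hdist z (insert 0 z) = 1" using hdist_ins[OF z0] by auto
  have h0: "hdist x x = 0" for x unfolding hdist_def by simp
  consider (c0) "ctyp g z = 0" | (c1) "ctyp g z = 1" | (c2) "ctyp g z = 2" using ctyp_cases[of g z] by auto
  then have "(P (insert 0 z) \<in> cube n \<and> P (P (insert 0 z)) = insert 0 z \<and> g (P (insert 0 z))
     \<and> (z \<notin> S1 n k g \<longrightarrow> hdist (insert 0 z) (P (insert 0 z)) \<le> 2))
     \<and> (P z \<in> cube n \<and> P (P z) = z \<and> \<not> g (P z) \<and> (z \<notin> S2 n k g \<longrightarrow> hdist z (P z) \<le> 2))"
  proof cases
    case c0
    note g = ctyp0[OF c0]
    show ?thesis
    proof (cases "g z")
      case True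
      then show ?thesis using phi_top[OF z] phi_bot[OF z] c0 g zc h1 h0 by simp
    next
      case False
      then show ?thesis using phi_top[OF z] phi_bot[OF z] c0 g zc h1 h0 by simp
    qed
  next
    case c1
    note g = ctyp1[OF c1]
    have notS2: "z \<notin> S2 n k g" using c1 S2_sub[of n k g] unfolding K0_def by auto
    have bot: "P z = z" using phi_bot[OF z] c1 by simp
    show ?thesis
    proof (cases "st k g z = 1")
      case True
      then have zS: "z \<in> S1 n k g" using z unfolding S1_def by simp
      note sp = sig_props[OF zS]
      have "P (insert 0 z) = \<sigma> z" using phi_top[OF z] c1 True by simp
      moreover have "P (\<sigma> z) = insert 0 z" using phi_bot[OF sp(1)] sp by simp
      ultimately show ?thesis using sp ctyp2[OF sp(2)] Bn_cube[OF sp(1)] bot g zc notS2 h0 zS by simp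
    next
      case False
      have s0: "st k g z = 0" using st_not1[OF z c1 False] .
      note pp = pt_props[OF z _ s0 kn] 
      have pw: "ctyp g (pt k g z) = 2" using pp(2) c1 by simp
      have "P (insert 0 z) = pt k g z" using phi_top[OF z] c1 False by simp
      moreover have "P (pt k g z) = insert 0 z" using phi_bot[OF pp(1)] pw pp c1 by simp
      ultimately show ?thesis using pp pw ctyp2[OF pw] Bn_cube[OF pp(1)] bot g zc notS2 h0 c1 by simp
    qed
  next
    case c2
    note g = ctyp2[OF c2]
    have notS1: "z \<notin> S1 n k g" using c2 S1_sub[of n k g] unfolding R0_def by auto
    have top: "P (insert 0 z) = insert 0 z" using phi_top[OF z] c2 by simp
    show ?thesis
    proof (cases "st k g z = 2")
      case True
      then have zS: "z \<in> S2 n k g" using z unfolding S2_def by simp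
      note sp = siginv_props[OF zS]
      note sp1 = S1_props[OF sp(1)]
      have "P z = insert 0 (inv_into (S1 n k g) \<sigma> z)" using phi_bot[OF z] c2 True by simp
      moreover have "P (insert 0 (inv_into (S1 n k g) \<sigma> z)) = z" using phi_top[OF conjunct1[OF sp1]] sp1 sp by simp
      ultimately show ?thesis using sp1 ctyp1[of g "inv_into (S1 n k g) \<sigma> z"] Bn_ins_cube[OF conjunct1[OF sp1] n1] top g zc notS1 h0 zS by simp
    next
      case False
      have s0: "st k g z = 0" using st_not2[OF z c2 False] .
      note pp = pt_props[OF z _ s0 kn]
      have pw: "ctyp g (pt k g z) = 1" using pp(2) c2 by simp
      have "P z = insert 0 (pt k g z)" using phi_bot[OF z] c2 False by simp
      moreover have "P (insert 0 (pt k g z)) = z" using phi_top[OF pp(1)] pw pp c2 by simp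
      ultimately show ?thesis using pp pw ctyp1[OF pw] Bn_ins_cube[OF pp(1) n1] top g zc h0 c2 False hdist_sym[of z "insert 0 (pt k g z)"] by simp
    qed
  qed
  then show "P (insert 0 z) \<in> cube n \<and> P (P (insert 0 z)) = insert 0 z \<and> g (P (insert 0 z))
     \<and> (z \<notin> S1 n k g \<longrightarrow> hdist (insert 0 z) (P (insert 0 z)) \<le> 2)"
    and "P z \<in> cube n \<and> P (P z) = z \<and> \<not> g (P z) \<and> (z \<notin> S2 n k g \<longrightarrow> hdist z (P z) \<le> 2)"
    by blast+
qed

lemma phi_cube:
  assumes x: "x \<in> cube n"
  shows "P x \<in> cube n" "P (P x) = x" "g (P x) = dictator x"
    "x \<notin> insert 0 ` S1 n k g \<union> S2 n k g \<Longrightarrow> hdist x (P x) \<le> 2"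
proof -
  have "x \<in> Bn n \<union> insert 0 ` Bn n" using x cube_split[OF n1] by simp
  then consider (b) "x \<in> Bn n" | (t) z where "z \<in> Bn n" "x = insert 0 z" by blast
  then have "P x \<in> cube n \<and> P (P x) = x \<and> g (P x) = dictator x
    \<and> (x \<notin> insert 0 ` S1 n k g \<union> S2 n k g \<longrightarrow> hdist x (P x) \<le> 2)"
  proof cases
    case b
    then show ?thesis using phi_base(2)[OF b] Bn0[OF b] unfolding dictator_def by auto
  next
    case t
    then show ?thesis using phi_base(1)[OF t(1)] unfolding dictator_def by auto
  qed
  then show "P x \<in> cube n" "P (P x) = x" "g (P x) = dictator x"
    "x \<notin> insert 0 ` S1 n k g \<union> S2 n k g \<Longrightarrow> hdist x (P x) \<le> 2" by blast+
qed

lemma phi_bij: "bij_betw P (cube n) (cube n)"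
  by (rule bij_betw_byWitness[where f'=P]) (use phi_cube in auto)

lemma phi_mapping: "is_mapping n dictator g P"
  unfolding is_mapping_def using phi_bij phi_cube(3) by auto

lemma phi_inv: "x \<in> cube n \<Longrightarrow> inv_into (cube n) P x = P x"
  using phi_bij phi_cube by (metis bij_betw_inv_into_left)

end



lemma card_cube: "card (cube n) = 2 ^ n"
  unfolding cube_def by (simp add: card_Pow)

lemma finite_cube: "finite (cube n)"
  unfolding cube_def by simp

lemma flip_cube: "x \<in> cube n \<Longrightarrow> i < n \<Longrightarrow> flip x i \<in> cube n"
  unfolding cube_def flip_def by auto

lemma flip_bij: "i < n \<Longrightarrow> bij_betw (\<lambda>x. flip x i) (cube n) (cube n)"
  by (rule bij_betw_byWitness[where f'="\<lambda>x. flip x i"]) (auto simp: flip_flip flip_cube)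

lemma cube_finite_el: "x \<in> cube n \<Longrightarrow> finite x"
  unfolding cube_def by (auto intro: finite_subset)

context phi_loc
begin

definition "Bad = insert 0 ` S1 n k g \<union> S2 n k g"

lemma card_Bad: "card Bad \<le> 2 * card (S1 n k g)"
proof -
  have "card Bad \<le> card (insert 0 ` S1 n k g) + card (S2 n k g)" unfolding Bad_def by (rule card_Un_le)
  also have "card (insert 0 ` S1 n k g) \<le> card (S1 n k g)" by (rule card_image_le) (simp add: S1_def finite_Bn)
  also have "card (S2 n k g) = card (S1 n k g)"
    using card_S1_S2[OF n1 kn] sig bij_betw_same_card by metis
  finally show ?thesis by simp
qed

lemma finite_Bad: "finite Bad"
  unfolding Bad_def S1_def S2_def using finite_Bn by auto

lemma good_count: "real (card {x \<in> cube n. hdist x (P x) \<le> 2}) \<ge> 2 ^ n - 2 * real (card (S1 n k g))"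
proof -
  have "cube n \<subseteq> {x \<in> cube n. hdist x (P x) \<le> 2} \<union> Bad"
    using phi_cube(4) unfolding Bad_def by blast
  then have "card (cube n) \<le> card ({x \<in> cube n. hdist x (P x) \<le> 2} \<union> Bad)"
    by (intro card_mono) (auto simp: finite_cube finite_Bad)
  also have "\<dots> \<le> card {x \<in> cube n. hdist x (P x) \<le> 2} + card Bad" by (rule card_Un_le)
  finally have "2 ^ n \<le> card {x \<in> cube n. hdist x (P x) \<le> 2} + 2 * card (S1 n k g)"
    using card_Bad card_cube by simp
  then have "real (2 ^ n) \<le> real (card {x \<in> cube n. hdist x (P x) \<le> 2}) + 2 * real (card (S1 n k g))"
    by (metis of_nat_add of_nat_le_iff of_nat_mult of_nat_numeral)
  then show ?thesis by simp
qed

lemma dsum: "(\<Sum>x\<in>cube n. real (hdist x (P x))) \<le> 2 * 2 ^ n + real n * 2 * real (card (S1 n k g))"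
proof -
  have "(\<Sum>x\<in>cube n. real (hdist x (P x))) \<le> (\<Sum>x\<in>cube n. 2 + (if x \<in> Bad then real n else 0))"
  proof (rule sum_mono)
    fix x assume x: "x \<in> cube n"
    show "real (hdist x (P x)) \<le> 2 + (if x \<in> Bad then real n else 0)"
    proof (cases "x \<in> Bad")
      case True
      have "hdist x (P x) \<le> n" using x phi_cube(1)[OF x] unfolding cube_def by (intro hdist_le_n) auto
      then show ?thesis using True by simp
    next
      case False
      then show ?thesis using phi_cube(4)[OF x] unfolding Bad_def by simp
    qed
  qed
  also have "\<dots> = 2 * 2 ^ n + real n * real (card (cube n \<inter> Bad))"
    by (simp add: sum.distrib sum.If_cases finite_cube card_cube Int_def)
  also have "real (card (cube n \<inter> Bad)) \<le> real (card Bad)"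
    by (simp add: card_mono finite_Bad)
  also have "real (card Bad) \<le> 2 * real (card (S1 n k g))"
    using card_Bad by linarith
  finally show ?thesis by (simp add: mult_left_mono)
qed

lemma stretch_bound: "avgStretch n P \<le> 1 + 2 * (\<Sum>x\<in>cube n. real (hdist x (P x))) / 2 ^ n"
proof -
  let ?d = "\<lambda>x. real (hdist x (P x))"
  let ?D = "\<Sum>x\<in>cube n. ?d x"
  have tri: "real (hdist (P x) (P (flip x i))) \<le> ?d x + 1 + ?d (flip x i)" if x: "x \<in> cube n" and i: "i < n" for x i
  proof -
    have fx: "flip x i \<in> cube n" using flip_cube[OF x i] .
    have fin: "finite (P x)" "finite x" "finite (flip x i)" "finite (P (flip x i))"
      using cube_finite_el phi_cube(1) x fx by auto
    have "hdist (P x) (P (flip x i)) \<le> hdist (P x) x + hdist x (P (flip x i))"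
      using hdist_triangle fin by blast
    also have "hdist x (P (flip x i)) \<le> hdist x (flip x i) + hdist (flip x i) (P (flip x i))"
      using hdist_triangle fin by blast
    finally have "hdist (P x) (P (flip x i)) \<le> hdist x (P x) + 1 + hdist (flip x i) (P (flip x i))"
      using hdist_flip[of i x] hdist_sym[of "P x" x] by simp
    then show ?thesis by linarith
  qed
  have "(\<Sum>x\<in>cube n. \<Sum>i<n. real (hdist (P x) (P (flip x i)))) \<le> (\<Sum>x\<in>cube n. \<Sum>i<n. ?d x + 1 + ?d (flip x i))"
    using tri by (intro sum_mono) auto
  also have "\<dots> = real n * ?D + real n * 2 ^ n + (\<Sum>i<n. \<Sum>x\<in>cube n. ?d (flip x i))"
    by (simp add: sum.distrib sum.swap[of _ "cube n" "{..<n}"] card_cube sum_distrib_left mult.commute)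
       (simp add: distrib_left sum.distrib card_cube)
  also have "(\<Sum>i<n. \<Sum>x\<in>cube n. ?d (flip x i)) = (\<Sum>i<n. ?D)"
  proof (rule sum.cong[OF refl])
    fix i assume "i \<in> {..<n}"
    then show "(\<Sum>x\<in>cube n. ?d (flip x i)) = ?D"
      using sum.reindex_bij_betw[OF flip_bij[of i n], of ?d] by simp
  qed
  finally have S: "(\<Sum>x\<in>cube n. \<Sum>i<n. real (hdist (P x) (P (flip x i)))) \<le> 2 * real n * ?D + real n * 2 ^ n"
    by simp
  have np: "real n > 0" using n1 by simp
  have "avgStretch n P \<le> (2 * real n * ?D + real n * 2 ^ n) / (2 ^ n * real n)"
    unfolding avgStretch_def using S np by (intro divide_right_mono) auto
  also have "\<dots> = 1 + 2 * ?D / 2 ^ n" using np by (simp add: field_simps)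
  finally show ?thesis .
qed

lemma stretch_le_n: "avgStretch n P \<le> real n"
proof -
  have "(\<Sum>x\<in>cube n. \<Sum>i<n. real (hdist (P x) (P (flip x i)))) \<le> (\<Sum>x\<in>cube n. \<Sum>i<n. real n)"
  proof (intro sum_mono)
    fix x i assume x: "x \<in> cube n" and i: "i \<in> {..<n}"
    have "hdist (P x) (P (flip x i)) \<le> n"
      using phi_cube(1)[OF x] phi_cube(1)[OF flip_cube[OF x]] i unfolding cube_def by (intro hdist_le_n) auto
    then show "real (hdist (P x) (P (flip x i))) \<le> real n" by simp
  qed
  also have "\<dots> = 2 ^ n * real n * real n" by (simp add: card_cube)
  finally show ?thesis unfolding avgStretch_def using n1 by (simp add: divide_le_eq algebra_simps)
qed

lemma stretch_inv: "avgStretch n (inv_into (cube n) P) = avgStretch n P"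
  unfolding avgStretch_def
  by (intro arg_cong2[where f="(/)"] refl sum.cong) (auto simp: phi_inv flip_cube)

end



lemma dep_sum: "finite A \<Longrightarrow> (\<And>a. a \<in> A \<Longrightarrow> dep D (h a)) \<Longrightarrow> dep D (\<lambda>g. \<Sum>a\<in>A. h a g)"
  unfolding dep_def by (auto intro!: sum.cong)

lemma dep_prod: "finite A \<Longrightarrow> (\<And>a. a \<in> A \<Longrightarrow> dep D (h a)) \<Longrightarrow> dep D (\<lambda>g. \<Prod>a\<in>A. h a g)"
  unfolding dep_def by (auto intro!: prod.cong)

lemma avg_prod:
  fixes h :: "'b \<Rightarrow> ('a \<Rightarrow> bool) \<Rightarrow> real"
  assumes "finite Y" "\<And>y. y \<in> Y \<Longrightarrow> finite (E y)" "\<And>y. y \<in> Y \<Longrightarrow> dep (E y) (h y)"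
    "\<And>y y'. y \<in> Y \<Longrightarrow> y' \<in> Y \<Longrightarrow> y \<noteq> y' \<Longrightarrow> E y \<inter> E y' = {}"
  shows "avg (\<Union>y\<in>Y. E y) (\<lambda>g. \<Prod>y\<in>Y. h y g) = (\<Prod>y\<in>Y. avg (E y) (h y))"
  using assms
proof (induction Y rule: finite_induct)
  case empty
  then show ?case by (simp add: avg_const)
next
  case (insert y Y)
  have d: "E y \<inter> (\<Union>y\<in>Y. E y) = {}" using insert.prems(3) insert.hyps(2) by blast
  have "avg (\<Union>y\<in>insert y Y. E y) (\<lambda>g. \<Prod>y\<in>insert y Y. h y g)
      = avg (E y \<union> (\<Union>y\<in>Y. E y)) (\<lambda>g. h y g * (\<Prod>y\<in>Y. h y g))"
    using insert.hyps by simp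
  also have "\<dots> = avg (E y) (h y) * avg (\<Union>y\<in>Y. E y) (\<lambda>g. \<Prod>y\<in>Y. h y g)"
  proof (rule avg_split[OF d])
    show "finite (E y)" "finite (\<Union>y\<in>Y. E y)" using insert by auto
    show "dep (E y) (h y)" using insert by auto
    show "dep (\<Union>y\<in>Y. E y) (\<lambda>g. \<Prod>y\<in>Y. h y g)"
      using insert by (intro dep_prod) (auto intro: dep_mono)
  qed
  also have "avg (\<Union>y\<in>Y. E y) (\<lambda>g. \<Prod>y\<in>Y. h y g) = (\<Prod>y\<in>Y. avg (E y) (h y))"
    using insert by (intro insert.IH) auto
  finally show ?case using insert.hyps by simp
qed

definition Yset :: "nat \<Rightarrow> nat \<Rightarrow> nat set set" where "Yset n k = Pow ({k<..<n})"
definition Cset :: "nat \<Rightarrow> nat \<Rightarrow> nat set \<Rightarrow> nat set set" where "Cset n k y = {z \<in> Bn n. z \<inter> {k<..} = y}"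
definition Eset :: "nat \<Rightarrow> nat \<Rightarrow> nat set \<Rightarrow> nat set set" where "Eset n k y = {x \<in> cube n. x \<inter> {k<..} = y}"
definition Uy where "Uy n k y g = (\<Sum>z\<in>Cset n k y. if st k g z = 1 then 1 else (0::real))"

lemma finite_Yset: "finite (Yset n k)" unfolding Yset_def by simp
lemma finite_Cset: "finite (Cset n k y)" unfolding Cset_def using finite_Bn by simp
lemma finite_Eset: "finite (Eset n k y)" unfolding Eset_def using finite_cube by simp

lemma Eset_Union: "(\<Union>y\<in>Yset n k. Eset n k y) = cube n"
  unfolding Yset_def Eset_def cube_def by (auto simp: subset_iff)

lemma Cset_Union: "(\<Union>y\<in>Yset n k. Cset n k y) = Bn n"
  unfolding Yset_def Cset_def Bn_def by (auto simp: subset_iff)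

lemma Dom_Eset: assumes "z \<in> Cset n k y" "k < n" shows "Dom k z \<subseteq> Eset n k y"
proof
  fix w assume w: "w \<in> Dom k z"
  have "z \<subseteq> {..<n}" using assms unfolding Cset_def Bn_def by auto
  then have "w \<subseteq> {..<n}" using Dom_sub w assms(2) by blast
  moreover have "w \<inter> {k<..} = z \<inter> {k<..}" using Dom_coord[OF w] by auto
  ultimately show "w \<in> Eset n k y" using assms unfolding Eset_def Cset_def cube_def by auto
qed

lemma dep_Uy: "k < n \<Longrightarrow> dep (Eset n k y) (Uy n k y)"
  unfolding Uy_def
  by (intro dep_sum finite_Cset) (rule dep_mono[OF dep_comp[OF dep_st] Dom_Eset])

lemma avg_Uy: "k < n \<Longrightarrow> avg (Eset n k y) (Uy n k y) = real (card (Cset n k y)) * r k"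
proof -
  assume kn: "k < n"
  have "avg (Eset n k y) (Uy n k y) = (\<Sum>z\<in>Cset n k y. avg (Eset n k y) (\<lambda>g. if st k g z = 1 then 1 else 0))"
    unfolding Uy_def by (rule avg_sum[OF finite_Cset])
  also have "\<dots> = (\<Sum>z\<in>Cset n k y. r k)"
  proof (rule sum.cong[OF refl])
    fix z assume z: "z \<in> Cset n k y"
    have "avg (Eset n k y) (\<lambda>g. if st k g z = 1 then 1 else 0) = avg (Dom k z) (\<lambda>g. if st k g z = 1 then 1 else 0)"
      by (rule avg_mono_dom[OF Dom_Eset[OF z kn] finite_Eset dep_comp[OF dep_st]])
    also have "\<dots> = r k" using p_st[of z k] z unfolding Cset_def Bn_def by auto
    finally show "avg (Eset n k y) (\<lambda>g. if st k g z = 1 then 1 else 0) = r k" .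
  qed
  finally show ?thesis by simp
qed

lemma Uy_bounds: "0 \<le> Uy n k y g \<and> Uy n k y g \<le> real (card (Cset n k y))"
  unfolding Uy_def using sum_mono[of "Cset n k y" "\<lambda>z. if st k g z = 1 then 1 else (0::real)" "\<lambda>z. 1"]
  by (auto intro: sum_nonneg)

lemma card_Cset: "card (Cset n k y) \<le> 2 ^ k"
proof -
  have "Cset n k y \<subseteq> (\<lambda>s. s \<union> y) ` Pow {..k}"
  proof
    fix z assume z: "z \<in> Cset n k y"
    then have "z = (z \<inter> {..k}) \<union> y" unfolding Cset_def by auto
    then show "z \<in> (\<lambda>s. s \<union> y) ` Pow {..k}" by blast
  qed
  then have "card (Cset n k y) \<le> card ((\<lambda>s. s \<union> y) ` Pow {..k})" by (intro card_mono) auto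
  also have "\<dots> \<le> card (Pow {..k})" by (rule card_image_le) simp
  also have "\<dots> = 2 ^ Suc k" by (simp add: card_Pow)
  finally have "card (Cset n k y) \<le> 2 ^ Suc k" .
  have "Cset n k y \<subseteq> (\<lambda>s. s \<union> y) ` Pow {1..k}"
  proof
    fix z assume z: "z \<in> Cset n k y"
    have z0: "0 \<notin> z" and yz: "y = z \<inter> {k<..}" using z unfolding Cset_def Bn_def by auto
    have "z = (z \<inter> {1..k}) \<union> y"
    proof (rule set_eqI)
      fix x show "x \<in> z \<longleftrightarrow> x \<in> (z \<inter> {1..k}) \<union> y"
      proof (cases "x = 0")
        case True then show ?thesis using z0 yz by auto
      next
        case False then show ?thesis using yz by auto
      qed
    qed
    then show "z \<in> (\<lambda>s. s \<union> y) ` Pow {1..k}" by blast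
  qed
  then have "card (Cset n k y) \<le> card ((\<lambda>s. s \<union> y) ` Pow {1..k})" by (intro card_mono) auto
  also have "\<dots> \<le> card (Pow {1..k})" by (rule card_image_le) simp
  also have "\<dots> = 2 ^ k" by (simp add: card_Pow)
  finally show ?thesis .
qed

lemma sum_card_Cset: "(\<Sum>y\<in>Yset n k. card (Cset n k y)) = card (Bn n)"
proof -
  have "card (\<Union>y\<in>Yset n k. Cset n k y) = (\<Sum>y\<in>Yset n k. card (Cset n k y))"
    by (rule card_UN_disjoint[OF finite_Yset]) (auto simp: finite_Cset[unfolded Cset_def] Cset_def)
  then show ?thesis using Cset_Union by simp
qed

lemma U_split: "real (card (S1 n k g)) = (\<Sum>y\<in>Yset n k. Uy n k y g)"
proof -
  have "real (card (S1 n k g)) = (\<Sum>z\<in>Bn n. if st k g z = 1 then 1 else (0::real))"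
    unfolding S1_def by (simp add: sum.If_cases finite_Bn Int_def)
  also have "\<dots> = (\<Sum>z\<in>(\<Union>y\<in>Yset n k. Cset n k y). if st k g z = 1 then 1 else (0::real))"
    using Cset_Union by simp
  also have "\<dots> = (\<Sum>y\<in>Yset n k. Uy n k y g)"
    unfolding Uy_def
    by (rule sum.UNION_disjoint[OF finite_Yset]) (auto simp: finite_Cset[unfolded Cset_def] Cset_def)
  finally show ?thesis .
qed

lemma exp_moment:
  assumes n1: "n \<ge> 1" and kn: "k < n"
  shows "avg (cube n) (\<lambda>g. exp (real (card (S1 n k g)) / 2 ^ k)) \<le> exp (2 * r k * 2 ^ (n - 1) / 2 ^ k)"
proof -
  let ?h = "\<lambda>y g. exp (Uy n k y g / 2 ^ k)"
  have eq: "(\<lambda>g. exp (real (card (S1 n k g)) / 2 ^ k)) = (\<lambda>g. \<Prod>y\<in>Yset n k. ?h y g)"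
    by (rule ext) (simp add: U_split sum_divide_distrib exp_sum finite_Yset)
  have "avg (cube n) (\<lambda>g. \<Prod>y\<in>Yset n k. ?h y g) = (\<Prod>y\<in>Yset n k. avg (Eset n k y) (?h y))"
    unfolding Eset_Union[of n k, symmetric]
  proof (rule avg_prod[OF finite_Yset finite_Eset])
    show "\<And>y. y \<in> Yset n k \<Longrightarrow> dep (Eset n k y) (?h y)"
      by (rule dep_comp[OF dep_Uy[OF kn], of _ "\<lambda>t. exp (t / 2 ^ k)", simplified])
  qed (auto simp: Eset_def)
  also have "\<dots> \<le> (\<Prod>y\<in>Yset n k. exp (2 * real (card (Cset n k y)) * r k / 2 ^ k))"
  proof (rule prod_mono, rule conjI)
    fix y assume y: "y \<in> Yset n k"
    show "0 \<le> avg (Eset n k y) (?h y)"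
      unfolding avg_def by (intro divide_nonneg_nonneg sum_nonneg) auto
    have "avg (Eset n k y) (?h y) \<le> avg (Eset n k y) (\<lambda>g. 1 + 2 * (Uy n k y g / 2 ^ k))"
    proof (rule avg_mono[OF finite_Eset])
      fix g
      have b: "0 \<le> Uy n k y g / 2 ^ k" "Uy n k y g / 2 ^ k \<le> 1"
        using Uy_bounds[of n k y g] card_Cset[of n k y]
        by (auto simp: divide_le_eq intro: order_trans)
      have "?h y g \<le> 1 + Uy n k y g / 2 ^ k + (Uy n k y g / 2 ^ k)^2" by (rule exp_bound[OF b])
      also have "(Uy n k y g / 2 ^ k)^2 \<le> Uy n k y g / 2 ^ k"
      proof -
        have "(Uy n k y g / 2 ^ k) * (Uy n k y g / 2 ^ k) \<le> (Uy n k y g / 2 ^ k) * 1"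
          using b by (intro mult_left_mono) auto
        then show ?thesis by (simp add: power2_eq_square del: times_divide_eq_left times_divide_eq_right)
      qed
      finally show "?h y g \<le> 1 + 2 * (Uy n k y g / 2 ^ k)" by simp
    qed
    also have "\<dots> = 1 + 2 * (real (card (Cset n k y)) * r k / 2 ^ k)"
      using avg_add[of "Eset n k y" "\<lambda>g. 1" "\<lambda>g. 2 * (Uy n k y g / 2 ^ k)"]
        avg_cmult[of "Eset n k y" "2 / 2 ^ k" "Uy n k y"] avg_const[OF finite_Eset] avg_Uy[OF kn]
      by (simp add: field_simps)
    also have "\<dots> \<le> exp (2 * real (card (Cset n k y)) * r k / 2 ^ k)"
      using exp_ge_add_one_self[of "2 * real (card (Cset n k y)) * r k / 2 ^ k"] by (simp add: mult.assoc)
    finally show "avg (Eset n k y) (?h y) \<le> exp (2 * real (card (Cset n k y)) * r k / 2 ^ k)" .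
  qed
  also have "\<dots> = exp (\<Sum>y\<in>Yset n k. 2 * real (card (Cset n k y)) * r k / 2 ^ k)"
    by (simp add: exp_sum finite_Yset)
  also have "(\<Sum>y\<in>Yset n k. 2 * real (card (Cset n k y)) * r k / 2 ^ k) = 2 * r k * 2 ^ (n - 1) / 2 ^ k"
  proof -
    have "(\<Sum>y\<in>Yset n k. 2 * real (card (Cset n k y)) * r k / 2 ^ k)
        = 2 * r k / 2 ^ k * real (\<Sum>y\<in>Yset n k. card (Cset n k y))"
      by (simp add: sum_distrib_left sum_divide_distrib[symmetric] mult_ac)
    also have "\<dots> = 2 * r k * 2 ^ (n - 1) / 2 ^ k" using sum_card_Cset card_Bn[OF n1] by simp
    finally show ?thesis .
  qed
  finally show ?thesis using eq by simp
qed

lemma markov_count: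
  assumes n1: "n \<ge> 1" and kn: "k < n"
  shows "real (card {g \<in> FunD (cube n). T \<le> real (card (S1 n k g)) / 2 ^ k}) * exp T
     \<le> real (card (FunD (cube n))) * exp (2 * r k * 2 ^ (n - 1) / 2 ^ k)"
proof -
  let ?V = "\<lambda>g. real (card (S1 n k g)) / 2 ^ k"
  have fin: "finite (FunD (cube n))" by (rule finite_FunD[OF finite_cube])
  have "real (card {g \<in> FunD (cube n). T \<le> ?V g}) * exp T = (\<Sum>g\<in>{g \<in> FunD (cube n). T \<le> ?V g}. exp T)"
    by simp
  also have "\<dots> \<le> (\<Sum>g\<in>{g \<in> FunD (cube n). T \<le> ?V g}. exp (?V g))"
    by (rule sum_mono) simp
  also have "\<dots> \<le> (\<Sum>g\<in>FunD (cube n). exp (?V g))"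
    by (rule sum_mono2[OF fin]) auto
  also have "\<dots> = real (card (FunD (cube n))) * avg (cube n) (\<lambda>g. exp (?V g))"
    unfolding avg_def using card_FunD_pos[OF finite_cube, of n] by simp
  also have "\<dots> \<le> real (card (FunD (cube n))) * exp (2 * r k * 2 ^ (n - 1) / 2 ^ k)"
    by (rule mult_left_mono[OF exp_moment[OF n1 kn]]) simp
  finally show ?thesis .
qed



lemma bal_sub: "balanced_funs n \<subseteq> FunD (cube n)"
  unfolding balanced_funs_def FunD_def by auto

lemma card_bal: "card (balanced_funs n) = (2 ^ n) choose (2 ^ (n - 1))"
proof -
  have "bij_betw (\<lambda>S x. x \<in> S) {S. S \<subseteq> cube n \<and> card S = 2 ^ (n - 1)} (balanced_funs n)"
  proof (rule bij_betw_byWitness[where f'="\<lambda>f. {x. f x}"])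
    show "\<forall>a\<in>{S. S \<subseteq> cube n \<and> card S = 2 ^ (n - 1)}. {x. x \<in> a} = a" by simp
    show "\<forall>a'\<in>balanced_funs n. (\<lambda>x. x \<in> {x. a' x}) = a'" by simp
    show "(\<lambda>S x. x \<in> S) ` {S. S \<subseteq> cube n \<and> card S = 2 ^ (n - 1)} \<subseteq> balanced_funs n"
    proof
      fix f assume "f \<in> (\<lambda>S x. x \<in> S) ` {S. S \<subseteq> cube n \<and> card S = 2 ^ (n - 1)}"
      then obtain S where S: "S \<subseteq> cube n" "card S = 2 ^ (n - 1)" "f = (\<lambda>x. x \<in> S)" by blast
      have "{x \<in> cube n. x \<in> S} = S" using S by auto
      then show "f \<in> balanced_funs n" using S unfolding balanced_funs_def by auto
    qed
    show "(\<lambda>f. {x. f x}) ` balanced_funs n \<subseteq> {S. S \<subseteq> cube n \<and> card S = 2 ^ (n - 1)}"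
    proof
      fix S assume "S \<in> (\<lambda>f. {x. f x}) ` balanced_funs n"
      then obtain f where f: "f \<in> balanced_funs n" "S = {x. f x}" by blast
      have "{x. f x} = {x \<in> cube n. f x}" using f unfolding balanced_funs_def by auto
      then show "S \<in> {S. S \<subseteq> cube n \<and> card S = 2 ^ (n - 1)}" using f unfolding balanced_funs_def by auto
    qed
  qed
  then have "card (balanced_funs n) = card {S. S \<subseteq> cube n \<and> card S = 2 ^ (n - 1)}"
    by (simp add: bij_betw_same_card)
  also have "\<dots> = (2 ^ n) choose (2 ^ (n - 1))" using n_subsets[OF finite_cube] card_cube by simp
  finally show ?thesis .
qed

lemma card_bal_lower: assumes "n \<ge> 1" shows "real (card (balanced_funs n)) \<ge> 2 ^ (2 ^ n) / 2 ^ n"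
proof -
  let ?m = "2 ^ (n - 1) :: nat"
  have m: "2 * ?m = 2 ^ n" using assms by (cases n) auto
  have "4 ^ ?m / (2 * real ?m) \<le> real ((2 * ?m) choose ?m)"
    by (rule central_binomial_lower_bound) simp
  moreover have "(4::real) ^ ?m = 2 ^ (2 ^ n)"
    by (metis m power_mult power2_eq_square numeral_Bit0 numeral_times_numeral mult_2 power_even_eq num_double)
  moreover have "2 * real ?m = 2 ^ n" using m by (metis of_nat_mult of_nat_numeral of_nat_power)
  ultimately show ?thesis unfolding card_bal using m by simp
qed

lemma good_phi:
  assumes n1: "n \<ge> 1" and f: "f \<in> balanced_funs n"
  defines "k \<equiv> n div 2"
  shows "\<exists>\<phi>. is_mapping n dictator f \<phi>
    \<and> unif_prob (cube n) (\<lambda>x. hdist x (\<phi> x) \<le> 2) \<ge> 1 - 2 * real (card (S1 n k f)) / 2 ^ n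
    \<and> avgStretch n \<phi> \<le> 5 + 4 * real n * real (card (S1 n k f)) / 2 ^ n
    \<and> avgStretch n \<phi> \<le> real n
    \<and> avgStretch n (inv_into (cube n) \<phi>) = avgStretch n \<phi>"
proof -
  have kn: "k < n" using n1 unfolding k_def by simp
  have bal: "card {x \<in> cube n. f x} = 2 ^ (n - 1)" using f unfolding balanced_funs_def by simp
  have "card (S1 n k f) = card (S2 n k f)" by (rule card_S1_S2[OF n1 kn bal])
  moreover have "finite (S1 n k f)" "finite (S2 n k f)" unfolding S1_def S2_def using finite_Bn by auto
  ultimately obtain \<sigma> where sig: "bij_betw \<sigma> (S1 n k f) (S2 n k f)"
    using finite_same_card_bij by blast
  interpret phi_loc n k f \<sigma> using n1 kn sig by unfold_locales
  let ?s = "real (card (S1 n k f))"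
  have "unif_prob (cube n) (\<lambda>x. hdist x (P x) \<le> 2) \<ge> 1 - 2 * ?s / 2 ^ n"
  proof -
    have "1 - 2 * ?s / 2 ^ n = (2 ^ n - 2 * ?s) / 2 ^ n" by (simp add: field_simps)
    also have "\<dots> \<le> real (card {x \<in> cube n. hdist x (P x) \<le> 2}) / 2 ^ n"
      by (rule divide_right_mono[OF good_count]) simp
    finally show ?thesis unfolding unif_prob_def card_cube by simp
  qed
  moreover have "avgStretch n P \<le> 5 + 4 * real n * ?s / 2 ^ n"
  proof -
    have "avgStretch n P \<le> 1 + 2 * (2 * 2 ^ n + real n * 2 * ?s) / 2 ^ n"
      using stretch_bound dsum by (smt (verit) divide_right_mono zero_le_power)
    also have "\<dots> = 5 + 4 * real n * ?s / 2 ^ n" by (simp add: field_simps)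
    finally show ?thesis .
  qed
  ultimately show ?thesis using phi_mapping stretch_le_n stretch_inv by blast
qed

lemma asym: "\<exists>N. \<forall>n\<ge>N. real n * ln 2 + ln 2 * 2 powr (real n / 8) \<le> 2 powr ((real n - 2) / 2) / (real n / 2 + 4)"
proof -
  have "eventually (\<lambda>x::real. x * ln 2 + ln 2 * 2 powr (x/8) \<le> 2 powr ((x-2)/2) / (x/2+4)) at_top"
    by real_asymp
  then have "eventually (\<lambda>n::nat. real n * ln 2 + ln 2 * 2 powr (real n/8) \<le> 2 powr ((real n-2)/2) / (real n/2+4)) sequentially"
    by (rule eventually_compose_filterlim[OF _ filterlim_real_sequentially])
  then show ?thesis unfolding eventually_sequentially by blast
qed



lemma two_pow_exp: "(2::real) ^ n = exp (real n * ln 2)"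
  using powr_realpow[of 2 n] by (simp add: powr_def)

lemma main_large:
  assumes n1: "n \<ge> 1"
    and asy: "real n * ln 2 + ln 2 * 2 powr (real n / 8) \<le> 2 powr ((real n - 2) / 2) / (real n / 2 + 4)"
    and Cb: "C \<ge> 6" and C'b: "C' \<ge> 17"
  shows "unif_prob (balanced_funs n)
       (\<lambda>f. \<exists>\<phi>. is_mapping n dictator f \<phi>
               \<and> unif_prob (cube n) (\<lambda>x. hdist x (\<phi> x) \<le> 2) \<ge> 1 - C / real n
               \<and> avgStretch n \<phi> \<le> C'
               \<and> avgStretch n (inv_into (cube n) \<phi>) \<le> C')
     \<ge> 1 - 2 powr (- (2 powr (1/8 * real n)))"
proof -
  define k where "k = n div 2"
  have kn: "k < n" using n1 unfolding k_def by simp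
  have k2: "real n \<le> 2 * real k + 1" "2 * real k \<le> real n" unfolding k_def by linarith+
  define M :: real where "M = 2 ^ (n - 1) / 2 ^ k"
  define T where "T = 3 * M / (real k + 4)"
  define Good where "Good = (\<lambda>f. \<exists>\<phi>. is_mapping n dictator f \<phi>
               \<and> unif_prob (cube n) (\<lambda>x. hdist x (\<phi> x) \<le> 2) \<ge> 1 - C / real n
               \<and> avgStretch n \<phi> \<le> C'
               \<and> avgStretch n (inv_into (cube n) \<phi>) \<le> C')"
  let ?s = "\<lambda>f. real (card (S1 n k f))"
  have p2: "(2::real) ^ n = 2 * 2 ^ (n - 1)" using n1 by (cases n) auto
  have good: "Good f" if f: "f \<in> balanced_funs n" and lt: "?s f / 2 ^ k < T" for f
  proof -
    obtain \<phi> where phi: "is_mapping n dictator f \<phi>"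
      "unif_prob (cube n) (\<lambda>x. hdist x (\<phi> x) \<le> 2) \<ge> 1 - 2 * ?s f / 2 ^ n"
      "avgStretch n \<phi> \<le> 5 + 4 * real n * ?s f / 2 ^ n"
      "avgStretch n (inv_into (cube n) \<phi>) = avgStretch n \<phi>"
      using good_phi[OF n1 f] unfolding k_def by blast
    have sT: "?s f < 3 * 2 ^ (n - 1) / (real k + 4)"
    proof -
      have "?s f < T * 2 ^ k" using lt by (simp add: divide_less_eq)
      also have "T * 2 ^ k = 3 * 2 ^ (n - 1) / (real k + 4)" unfolding T_def M_def by simp
      finally show ?thesis .
    qed
    have a: "2 * ?s f / 2 ^ n \<le> 3 / (real k + 4)"
      using sT unfolding p2 by (simp add: field_simps)
    have b: "3 / (real k + 4) \<le> C / real n"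
    proof -
      have "6 * real k \<le> C * real k" using Cb by (intro mult_right_mono) auto
      then show ?thesis using k2 Cb n1 by (simp add: field_simps)
    qed
    have c: "4 * real n * ?s f / 2 ^ n \<le> 6 * real n / (real k + 4)"
    proof -
      have "4 * real n * ?s f / 2 ^ n = real n * (2 * (2 * ?s f / 2 ^ n))" by simp
      also have "\<dots> \<le> real n * (2 * (3 / (real k + 4)))"
        using a by (intro mult_left_mono) auto
      finally show ?thesis by (simp add: mult.commute)
    qed
    have d: "6 * real n / (real k + 4) \<le> 12" using k2 by (simp add: field_simps)
    show ?thesis unfolding Good_def
      using phi a b c d C'b by (intro exI[of _ \<phi>]) auto
  qed
  define Bad where "Bad = {f \<in> balanced_funs n. T \<le> ?s f / 2 ^ k}"
  have finB: "finite (balanced_funs n)" using bal_sub finite_FunD[OF finite_cube] finite_subset by blast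
  have cbpos: "real (card (balanced_funs n)) > 0"
    using card_bal_lower[OF n1] by (smt (verit) divide_pos_pos zero_less_power)
  have "balanced_funs n - Bad \<subseteq> {f \<in> balanced_funs n. Good f}"
    using good unfolding Bad_def by force
  then have "card (balanced_funs n - Bad) \<le> card {f \<in> balanced_funs n. Good f}"
    using finB by (intro card_mono) auto
  moreover have "card (balanced_funs n - Bad) = card (balanced_funs n) - card Bad"
    using finB by (intro card_Diff_subset) (auto simp: Bad_def)
  moreover have "card Bad \<le> card (balanced_funs n)" using finB by (intro card_mono) (auto simp: Bad_def)
  ultimately have cnt: "real (card (balanced_funs n)) - real (card Bad) \<le> real (card {f \<in> balanced_funs n. Good f})"
    by linarith
  have up: "unif_prob (balanced_funs n) Good \<ge> 1 - real (card Bad) / real (card (balanced_funs n))"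
  proof -
    have "1 - real (card Bad) / real (card (balanced_funs n))
        = (real (card (balanced_funs n)) - real (card Bad)) / real (card (balanced_funs n))"
      using cbpos by (simp add: field_simps)
    also have "\<dots> \<le> real (card {f \<in> balanced_funs n. Good f}) / real (card (balanced_funs n))"
      by (rule divide_right_mono[OF cnt]) (use cbpos in simp)
    finally show ?thesis unfolding unif_prob_def .
  qed
  have "card Bad \<le> card {g \<in> FunD (cube n). T \<le> ?s g / 2 ^ k}"
    using bal_sub finite_FunD[OF finite_cube] unfolding Bad_def by (intro card_mono) auto
  then have "real (card Bad) * exp T \<le> real (card (FunD (cube n))) * exp (2 * r k * 2 ^ (n - 1) / 2 ^ k)"
    using markov_count[OF n1 kn, of T] by (smt (verit) exp_gt_zero mult_right_mono of_nat_le_iff)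
  then have "real (card Bad) \<le> real (card (FunD (cube n))) * exp (2 * r k * 2 ^ (n - 1) / 2 ^ k) / exp T"
    by (simp add: le_divide_eq)
  also have "\<dots> = 2 ^ (2 ^ n) * exp (2 * r k * M - T)"
    unfolding M_def card_FunD[OF finite_cube] card_cube exp_diff by simp
  finally have cB: "real (card Bad) \<le> 2 ^ (2 ^ n) * exp (2 * r k * M - T)" .
  have Mpos: "M > 0" unfolding M_def by simp
  have "2 * r k * M - T \<le> 2 * M / (real k + 4) - T"
  proof -
    have "(2 * M) * r k \<le> (2 * M) * (1 / (real k + 4))" using r_bound[of k] Mpos by (intro mult_left_mono) auto
    then show ?thesis by (simp add: mult_ac)
  qed
  also have "\<dots> = - (M / (real k + 4))"
  proof -
    have kp: "real k + 4 \<noteq> 0" by linarith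
    have "2 * M / (real k + 4) - 3 * M / (real k + 4) = (2 * M - 3 * M) / (real k + 4)"
      by (rule diff_divide_distrib[symmetric])
    also have "\<dots> = - (M / (real k + 4))" by simp
    finally show ?thesis unfolding T_def .
  qed
  finally have eb: "2 * r k * M - T \<le> - (M / (real k + 4))" .
  define L where "L = 2 powr ((real n - 2) / 2) / (real n / 2 + 4)"
  have hML: "L \<le> M / (real k + 4)"
  proof -
    have "M = 2 powr (real (n - 1) - real k)"
      unfolding M_def by (simp add: powr_diff powr_realpow)
    also have "2 powr ((real n - 2) / 2) \<le> 2 powr (real (n - 1) - real k)"
      using k2 n1 by (intro powr_mono) (auto simp: of_nat_diff)
    finally have "2 powr ((real n - 2) / 2) \<le> M" .
    then show ?thesis unfolding L_def using k2 Mpos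
      by (intro frac_le) auto
  qed
  have ratio: "real (card Bad) / real (card (balanced_funs n)) \<le> 2 ^ n * exp (- L)"
  proof -
    have "real (card Bad) / real (card (balanced_funs n)) \<le> 2 ^ (2 ^ n) * exp (2 * r k * M - T) / (2 ^ (2 ^ n) / 2 ^ n)"
      using cB card_bal_lower[OF n1] cbpos
      by (intro frac_le) auto
    also have "\<dots> = 2 ^ n * exp (2 * r k * M - T)" by simp
    also have "\<dots> \<le> 2 ^ n * exp (- L)" using eb hML by simp
    finally show ?thesis .
  qed
  also have "2 ^ n * exp (- L) = exp (real n * ln 2 - L)" by (simp add: two_pow_exp exp_diff exp_minus field_simps)
  also have "\<dots> \<le> exp (- (ln 2 * 2 powr (real n / 8)))" using asy unfolding L_def by simp
  also have "\<dots> = 2 powr (- (2 powr (1/8 * real n)))" by (simp add: powr_def mult.commute)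
  finally show ?thesis using up unfolding Good_def by linarith
qed

theorem theorem4:
  "\<exists>c::real. c > 0 \<and> (\<exists>C::real. \<exists>C'::real. \<forall>n::nat. n \<ge> 1 \<longrightarrow>
     unif_prob (balanced_funs n)
       (\<lambda>f. \<exists>\<phi>. is_mapping n dictator f \<phi>
               \<and> unif_prob (cube n) (\<lambda>x. hdist x (\<phi> x) \<le> 2) \<ge> 1 - C / real n
               \<and> avgStretch n \<phi> \<le> C'
               \<and> avgStretch n (inv_into (cube n) \<phi>) \<le> C')
     \<ge> 1 - 2 powr (- (2 powr (c * real n))))"
proof -
  obtain N where N: "\<And>n. n \<ge> N \<Longrightarrow> real n * ln 2 + ln 2 * 2 powr (real n / 8) \<le> 2 powr ((real n - 2) / 2) / (real n / 2 + 4)"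
    using asym by blast
  define C where "C = real N + 6"
  define C' where "C' = real N + 17"
  have "\<forall>n::nat. n \<ge> 1 \<longrightarrow>
     unif_prob (balanced_funs n)
       (\<lambda>f. \<exists>\<phi>. is_mapping n dictator f \<phi>
               \<and> unif_prob (cube n) (\<lambda>x. hdist x (\<phi> x) \<le> 2) \<ge> 1 - C / real n
               \<and> avgStretch n \<phi> \<le> C'
               \<and> avgStretch n (inv_into (cube n) \<phi>) \<le> C')
     \<ge> 1 - 2 powr (- (2 powr (1/8 * real n)))"
  proof (intro allI impI)
    fix n :: nat assume n1: "n \<ge> 1"
    show "unif_prob (balanced_funs n)
       (\<lambda>f. \<exists>\<phi>. is_mapping n dictator f \<phi>
               \<and> unif_prob (cube n) (\<lambda>x. hdist x (\<phi> x) \<le> 2) \<ge> 1 - C / real n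
               \<and> avgStretch n \<phi> \<le> C'
               \<and> avgStretch n (inv_into (cube n) \<phi>) \<le> C')
     \<ge> 1 - 2 powr (- (2 powr (1/8 * real n)))"
    proof (cases "n \<ge> N")
      case True
      show ?thesis by (rule main_large[OF n1 N[OF True]]) (auto simp: C_def C'_def)
    next
      case False
      define Good where "Good = (\<lambda>f. \<exists>\<phi>. is_mapping n dictator f \<phi>
               \<and> unif_prob (cube n) (\<lambda>x. hdist x (\<phi> x) \<le> 2) \<ge> 1 - C / real n
               \<and> avgStretch n \<phi> \<le> C'
               \<and> avgStretch n (inv_into (cube n) \<phi>) \<le> C')"
      have all: "Good f" if f: "f \<in> balanced_funs n" for f
      proof -
        obtain \<phi> where phi: "is_mapping n dictator f \<phi>" "avgStretch n \<phi> \<le> real n"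
          "avgStretch n (inv_into (cube n) \<phi>) = avgStretch n \<phi>"
          using good_phi[OF n1 f] by blast
        have "1 - C / real n \<le> 0" using False n1 unfolding C_def by (simp add: field_simps)
        moreover have "0 \<le> unif_prob (cube n) (\<lambda>x. hdist x (\<phi> x) \<le> 2)" unfolding unif_prob_def by simp
        moreover have "real n \<le> C'" using False unfolding C'_def by simp
        ultimately show ?thesis unfolding Good_def using phi by (intro exI[of _ \<phi>]) auto
      qed
      have cbpos: "real (card (balanced_funs n)) > 0"
        using card_bal_lower[OF n1] by (smt (verit) divide_pos_pos zero_less_power)
      have "{f \<in> balanced_funs n. Good f} = balanced_funs n" using all by auto
      then have "unif_prob (balanced_funs n) Good = 1" unfolding unif_prob_def using cbpos by simp
      moreover have "0 \<le> 2 powr (- (2 powr (1/8 * real n)))" by simp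
      ultimately show ?thesis unfolding Good_def by linarith
    qed
  qed
  then show ?thesis by (intro exI[of _ "1/8"] conjI exI[of _ C] exI[of _ C']) auto
qed


end
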